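(* Let $G$ be a graph with a perfect ordering $\{B_1,\dots,B_k\}$ of its prime components, and let $f:\mathbb{R}\to\mathbb{R}$ satisfy $f(0)=0$. Define $s:=\max_{i}|S_i|$, where $S_i:=(B_1\cup\dots\cup B_{i-1})\cap B_i$. If $f[-]$ preserves positivity on $\mathcal{P}_{G_{B_i}}$ for all $1\le i\le k$ and is Loewner super-additive on $\mathcal{P}_{K_s}$, then $f[-]$ preserves positivity on $\mathcal{P}_G$.
   Context: Graphs are finite and simple; $G_U$ is the subgraph induced on $U$; $K_s$ is the complete graph on $s$ vertices. A decomposition of $G=(V,E)$ is a partition $(A,C,B)$ of $V$ with $A,B$ nonempty such that every path from $A$ to $B$ meets $C$ and $G_C$ is complete; $G$ is prime if it admits no decomposition. Decomposing $G$ into $G_{A\cup C}$ and $G_{B\cup C}$ and iterating until no further decomposition is possible yields the prime components of $G$ (vertex subsets inducing prime graphs). For subsets $B_1,\dots,B_k$, with $H_j=B_1\cup\dots\cup B_j$, $H_0=\emptyset$, $S_j=H_{j-1}\cap B_j$, the sequence is a perfect ordering if for every $1<i\le k$ there is $j<i$ with $S_i\subset B_j$, and each $S_i$ induces a complete graph. For a graph $H$ on $\{1,\dots,n\}$, $\mathcal{P}_H$ is the set of real symmetric PSD $n\times n$ matrices $M$ with $m_{ij}=0$ for $i\ne j$ non-adjacent. $f[M]:=(f(m_{ij}))$; $f[-]$ preserves positivity on $\mathcal{P}_H$ if $f[M]\in\mathcal{P}_H$ for all $M\in\mathcal{P}_H$; it is Loewner super-additive on $\mathcal{P}_H$ if $f[M+N]-f[M]-f[N]\in\mathcal{P}_H$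 for all $M,N\in\mathcal{P}_H$. *)

theory Defs
  imports Complex_Main
begin

definition simple_graph :: "'a set \<Rightarrow> ('a \<Rightarrow> 'a \<Rightarrow> bool) \<Rightarrow> bool" where
  "simple_graph V E \<longleftrightarrow> finite V \<and>
     (\<forall>x y. E x y \<longrightarrow> x \<in> V \<and> y \<in> V \<and> x \<noteq> y \<and> E y x)"

definition clique :: "('a \<Rightarrow> 'a \<Rightarrow> bool) \<Rightarrow> 'a set \<Rightarrow> bool" where
  "clique E C \<longleftrightarrow> (\<forall>x\<in>C. \<forall>y\<in>C. x \<noteq> y \<longrightarrow> E x y)"

definition is_path :: "('a \<Rightarrow> 'a \<Rightarrow> bool) \<Rightarrow> 'a set \<Rightarrow> 'a list \<Rightarrow> bool" where
  "is_path E U xs \<longleftrightarrow> xs \<noteq> [] \<and> distinct xs \<and> set xs \<subseteq> U \<and>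
     (\<forall>i. Suc i < length xs \<longrightarrow> E (xs ! i) (xs ! Suc i))"

definition decomposition :: "('a \<Rightarrow> 'a \<Rightarrow> bool) \<Rightarrow> 'a set \<Rightarrow> 'a set \<Rightarrow> 'a set \<Rightarrow> 'a set \<Rightarrow> bool" where
  "decomposition E U A C B \<longleftrightarrow>
     A \<union> C \<union> B = U \<and> A \<inter> C = {} \<and> A \<inter> B = {} \<and> C \<inter> B = {} \<and>
     A \<noteq> {} \<and> B \<noteq> {} \<and>
     (\<forall>xs. is_path E U xs \<and> hd xs \<in> A \<and> last xs \<in> B \<longrightarrow> set xs \<inter> C \<noteq> {}) \<and>
     clique E C"

definition prime_graph :: "('a \<Rightarrow> 'a \<Rightarrow> bool) \<Rightarrow> 'a set \<Rightarrow> bool" where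
  "prime_graph E U \<longleftrightarrow> \<not> (\<exists>A C B. decomposition E U A C B)"

inductive prime_comps :: "('a \<Rightarrow> 'a \<Rightarrow> bool) \<Rightarrow> 'a set \<Rightarrow> 'a set set \<Rightarrow> bool"
  for E where
  base: "prime_graph E U \<Longrightarrow> prime_comps E U {U}"
| step: "decomposition E U A C B \<Longrightarrow> prime_comps E (A \<union> C) P1 \<Longrightarrow>
         prime_comps E (B \<union> C) P2 \<Longrightarrow> prime_comps E U (P1 \<union> P2)"

text \<open>S_i for 0-based index i: (B_0 \<union> ... \<union> B_(i-1)) \<inter> B_i.\<close>
definition sep_set :: "'a set list \<Rightarrow> nat \<Rightarrow> 'a set" where
  "sep_set Bs i = (\<Union>j<i. Bs ! j) \<inter> Bs ! i"

definition perfect_ordering :: "('a \<Rightarrow> 'a \<Rightarrow> bool) \<Rightarrow> 'a set list \<Rightarrow> bool" where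
  "perfect_ordering E Bs \<longleftrightarrow>
     (\<forall>i<length Bs. clique E (sep_set Bs i) \<and> (0 < i \<longrightarrow> (\<exists>j<i. sep_set Bs i \<subseteq> Bs ! j)))"

definition max_sep :: "'a set list \<Rightarrow> nat" where
  "max_sep Bs = Max ((\<lambda>i. card (sep_set Bs i)) ` {..<length Bs})"

definition psd_on :: "'i set \<Rightarrow> ('i \<Rightarrow> 'i \<Rightarrow> real) \<Rightarrow> bool" where
  "psd_on I M \<longleftrightarrow> (\<forall>i\<in>I. \<forall>j\<in>I. M i j = M j i) \<and>
     (\<forall>x :: 'i \<Rightarrow> real. 0 \<le> (\<Sum>i\<in>I. \<Sum>j\<in>I. x i * M i j * x j))"

definition PH :: "'i set \<Rightarrow> ('i \<Rightarrow> 'i \<Rightarrow> bool) \<Rightarrow> ('i \<Rightarrow> 'i \<Rightarrow> real) \<Rightarrow> bool" where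
  "PH I E M \<longleftrightarrow> psd_on I M \<and> (\<forall>i\<in>I. \<forall>j\<in>I. i \<noteq> j \<and> \<not> E i j \<longrightarrow> M i j = 0)"

definition entrywise :: "(real \<Rightarrow> real) \<Rightarrow> ('i \<Rightarrow> 'i \<Rightarrow> real) \<Rightarrow> ('i \<Rightarrow> 'i \<Rightarrow> real)" where
  "entrywise f M = (\<lambda>i j. f (M i j))"

definition preserves_positivity :: "'i set \<Rightarrow> ('i \<Rightarrow> 'i \<Rightarrow> bool) \<Rightarrow> (real \<Rightarrow> real) \<Rightarrow> bool" where
  "preserves_positivity I E f \<longleftrightarrow> (\<forall>M. PH I E M \<longrightarrow> PH I E (entrywise f M))"

definition loewner_superadditive :: "'i set \<Rightarrow> ('i \<Rightarrow> 'i \<Rightarrow> bool) \<Rightarrow> (real \<Rightarrow> real) \<Rightarrow> bool" where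
  "loewner_superadditive I E f \<longleftrightarrow>
     (\<forall>M N. PH I E M \<and> PH I E N \<longrightarrow>
        PH I E (\<lambda>i j. entrywise f (\<lambda>a b. M a b + N a b) i j - entrywise f M i j - entrywise f N i j))"

definition complete_adj :: "nat \<Rightarrow> nat \<Rightarrow> bool" where
  "complete_adj i j \<longleftrightarrow> i \<noteq> j"

end

theory Submission
  imports Defs
begin


definition qf :: "'i set \<Rightarrow> ('i \<Rightarrow> 'i \<Rightarrow> real) \<Rightarrow> ('i \<Rightarrow> real) \<Rightarrow> real" where
  "qf I M x = (\<Sum>i\<in>I. \<Sum>j\<in>I. x i * M i j * x j)"

lemma psd_on_qf: "psd_on I M \<longleftrightarrow> (\<forall>i\<in>I. \<forall>j\<in>I. M i j = M j i) \<and> (\<forall>x. 0 \<le> qf I M x)"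
  unfolding psd_on_def qf_def by simp

lemma sum2_subset:
  fixes g :: "'i \<Rightarrow> 'i \<Rightarrow> real"
  assumes "finite J" "I \<subseteq> J" "\<forall>i\<in>J. \<forall>j\<in>J. \<not>(i\<in>I \<and> j\<in>I) \<longrightarrow> g i j = 0"
  shows "(\<Sum>i\<in>J. \<Sum>j\<in>J. g i j) = (\<Sum>i\<in>I. \<Sum>j\<in>I. g i j)"
proof -
  have "(\<Sum>i\<in>J. \<Sum>j\<in>J. g i j) = (\<Sum>i\<in>I. \<Sum>j\<in>J. g i j)"
    by (rule sum.mono_neutral_right) (use assms in auto)
  also have "\<dots> = (\<Sum>i\<in>I. \<Sum>j\<in>I. g i j)"
  proof (rule sum.cong[OF refl])
    fix i assume "i \<in> I"
    show "(\<Sum>j\<in>J. g i j) = (\<Sum>j\<in>I. g i j)"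
      by (rule sum.mono_neutral_right) (use assms \<open>i\<in>I\<close> in auto)
  qed
  finally show ?thesis .
qed

lemma psd_restrict:
  assumes "psd_on J M" "finite J" "I \<subseteq> J"
  shows "psd_on I M"
  unfolding psd_on_qf
proof (intro conjI allI)
  show "\<forall>i\<in>I. \<forall>j\<in>I. M i j = M j i" using assms unfolding psd_on_qf by blast
  fix x :: "_ \<Rightarrow> real"
  define x' where "x' = (\<lambda>i. if i \<in> I then x i else 0)"
  have "qf I M x = qf I M x'" unfolding qf_def x'_def by (intro sum.cong) auto
  also have "\<dots> = qf J M x'" unfolding qf_def
    by (rule sum2_subset[symmetric]) (use assms in \<open>auto simp: x'_def\<close>)
  also have "\<dots> \<ge> 0" using assms(1) unfolding psd_on_qf by blast
  finally show "0 \<le> qf I M x" by simp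
qed

lemma psd_extend:
  assumes "psd_on I M" "finite J" "I \<subseteq> J" "\<forall>i\<in>J. \<forall>j\<in>J. \<not>(i\<in>I \<and> j\<in>I) \<longrightarrow> M i j = 0"
  shows "psd_on J M"
  unfolding psd_on_qf
proof (intro conjI allI)
  show "\<forall>i\<in>J. \<forall>j\<in>J. M i j = M j i" using assms unfolding psd_on_qf by metis
  fix x :: "_ \<Rightarrow> real"
  have "qf J M x = qf I M x" unfolding qf_def
    by (rule sum2_subset) (use assms in auto)
  then show "0 \<le> qf J M x" using assms(1) unfolding psd_on_qf by simp
qed

lemma psd_cong:
  assumes "psd_on I M" "\<forall>i\<in>I. \<forall>j\<in>I. M i j = N i j"
  shows "psd_on I N"
proof -
  have "qf I N x = qf I M x" for x unfolding qf_def using assms(2) by (intro sum.cong) auto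
  then show ?thesis using assms unfolding psd_on_qf by metis
qed

lemma psd_add:
  assumes "psd_on I A" "psd_on I B"
  shows "psd_on I (\<lambda>i j. A i j + B i j)"
proof -
  have "qf I (\<lambda>i j. A i j + B i j) x = qf I A x + qf I B x" for x
    unfolding qf_def by (simp add: algebra_simps sum.distrib)
  then show ?thesis using assms unfolding psd_on_qf by (metis add_nonneg_nonneg)
qed

lemma psd_zero: "psd_on I (\<lambda>i j. 0)" unfolding psd_on_def by simp

lemma psd_reindex:
  assumes "bij_betw g S T" "psd_on T N"
  shows "psd_on S (\<lambda>u v. N (g u) (g v))"
  unfolding psd_on_qf
proof (intro conjI allI)
  show "\<forall>i\<in>S. \<forall>j\<in>S. N (g i) (g j) = N (g j) (g i)"
    using assms bij_betwE unfolding psd_on_qf by metis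
  fix x :: "_ \<Rightarrow> real"
  define h where "h = inv_into S g"
  have hg: "h (g u) = u" if "u \<in> S" for u
    using assms(1) that unfolding h_def by (simp add: bij_betw_inv_into_left)
  have "qf T N (\<lambda>t. x (h t)) = qf S (\<lambda>u v. N (g u) (g v)) x"
  proof -
    have "qf T N (\<lambda>t. x (h t)) = (\<Sum>u\<in>S. \<Sum>j\<in>T. x (h (g u)) * N (g u) j * x (h j))"
      unfolding qf_def by (rule sum.reindex_bij_betw[OF assms(1), symmetric])
    also have "\<dots> = (\<Sum>u\<in>S. \<Sum>v\<in>S. x (h (g u)) * N (g u) (g v) * x (h (g v)))"
      by (rule sum.cong[OF refl], rule sum.reindex_bij_betw[OF assms(1), symmetric])
    also have "\<dots> = qf S (\<lambda>u v. N (g u) (g v)) x"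
      unfolding qf_def by (intro sum.cong) (auto simp: hg)
    finally show ?thesis .
  qed
  then show "0 \<le> qf S (\<lambda>u v. N (g u) (g v)) x" using assms(2) unfolding psd_on_qf by metis
qed

lemma qf_insert:
  assumes "finite I" "a \<notin> I" "\<forall>j\<in>I. M j a = M a j"
  shows "qf (insert a I) M x = qf I M x + 2 * x a * (\<Sum>j\<in>I. M a j * x j) + x a * M a a * x a"
proof -
  have "qf (insert a I) M x = (x a * M a a * x a + (\<Sum>j\<in>I. x a * M a j * x j)) +
      (\<Sum>i\<in>I. x i * M i a * x a + (\<Sum>j\<in>I. x i * M i j * x j))"
    unfolding qf_def using assms by (simp add: sum.insert)
  also have "(\<Sum>i\<in>I. x i * M i a * x a + (\<Sum>j\<in>I. x i * M i j * x j)) =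
      (\<Sum>i\<in>I. x a * M a i * x i) + qf I M x"
    unfolding qf_def using assms(3) by (simp add: sum.distrib algebra_simps)
  also have "(\<Sum>j\<in>I. x a * M a j * x j) = x a * (\<Sum>j\<in>I. M a j * x j)"
    by (simp add: sum_distrib_left algebra_simps)
  finally show ?thesis by (simp add: algebra_simps)
qed



lemma psd_diag_nonneg:
  assumes "psd_on U M" "finite U" "a \<in> U"
  shows "0 \<le> M a a"
proof -
  have "psd_on {a} M" using psd_restrict[OF assms(1,2)] assms(3) by simp
  then have "0 \<le> qf {a} M (\<lambda>_. 1)" unfolding psd_on_qf by blast
  then show ?thesis unfolding qf_def by simp
qed

lemma psd_diag_zero:
  assumes "psd_on U M" "finite U" "a \<in> U" "v \<in> U" "M a a = 0"
  shows "M a v = 0"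
proof (cases "v = a")
  case True then show ?thesis using assms by simp
next
  case False
  have P: "psd_on {a, v} M" using psd_restrict[OF assms(1,2)] assms(3,4) by simp
  have sym: "M v a = M a v" using assms(1,3,4) unfolding psd_on_def by blast
  show ?thesis
  proof (rule ccontr)
    assume ne: "M a v \<noteq> 0"
    define t where "t = - (M v v + 1) / (2 * M a v)"
    define x where "x = (\<lambda>i. if i = a then t else if i = v then 1 else (0::real))"
    have "0 \<le> qf {a, v} M x" using P unfolding psd_on_qf by blast
    also have "qf {a, v} M x = 2 * t * M a v + M v v"
      unfolding qf_def x_def using False sym assms(5) by (simp add: algebra_simps)
    also have "\<dots> = -1" unfolding t_def using ne by (simp add: field_simps)
    finally show False by simp
  qed
qed

lemma psd_split:
  assumes "finite X" "finite Y" "psd_on (X \<union> Y) M" "\<forall>u\<in>X-Y. \<forall>v\<in>Y-X. M u v = 0"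
  shows "\<exists>M1 M2. psd_on (X\<union>Y) M1 \<and> psd_on (X\<union>Y) M2 \<and>
     (\<forall>u v. u\<notin>X \<or> v\<notin>X \<longrightarrow> M1 u v = 0) \<and> (\<forall>u v. u\<notin>Y \<or> v\<notin>Y \<longrightarrow> M2 u v = 0) \<and>
     (\<forall>u\<in>X\<union>Y. \<forall>v\<in>X\<union>Y. M u v = M1 u v + M2 u v)"
  using assms
proof (induction "card (X - Y)" arbitrary: X M)
  case 0
  have "X - Y = {}" using "0.hyps" "0.prems"(1) by simp
  then have XY: "X \<subseteq> Y" by auto
  define M2 where "M2 = (\<lambda>u v. if u \<in> Y \<and> v \<in> Y then M u v else 0)"
  have "psd_on (X\<union>Y) M2" using "0.prems"(3) unfolding M2_def by (rule psd_cong) (use XY in auto)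
  then show ?case using XY
    by (intro exI[of _ "\<lambda>u v. 0"] exI[of _ M2]) (auto simp: psd_zero M2_def)
next
  case (Suc n)
  then obtain a where aXY: "a \<in> X - Y" by (metis card.empty ex_in_conv nat.distinct(1))
  define U where "U = X \<union> Y"
  define U' where "U' = U - {a}"
  define X' where "X' = X - {a}"
  have finU: "finite U" using Suc.prems unfolding U_def by simp
  have U'eq: "X' \<union> Y = U'" using aXY unfolding U'_def X'_def U_def by auto
  have aU: "a \<in> U" using aXY unfolding U_def by auto
  have psdM: "psd_on U M" using Suc.prems unfolding U_def by simp
  have symM: "\<forall>i\<in>U. \<forall>j\<in>U. M i j = M j i" using psdM unfolding psd_on_def by blast
  define p where "p = M a a"
  have p0: "p \<ge> 0" unfolding p_def by (rule psd_diag_nonneg[OF psdM finU aU])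
  have Mav0: "M a v = 0" if "v \<in> U" "v \<notin> X" for v
    using Suc.prems(4) aXY that unfolding U_def by auto
  define R where "R = (\<lambda>u v. if u \<in> X \<and> v \<in> X then M a u * M a v / p else 0)"
  define M' where "M' = (\<lambda>u v. M u v - R u v)"
  have Rsym: "R u v = R v u" for u v unfolding R_def by (simp add: algebra_simps)
  have Rval: "R u v = M a u * M a v / p" if "u \<in> U" "v \<in> U" for u v
    using Mav0 that unfolding R_def by auto
  have qfR: "qf I R x = (\<Sum>u\<in>I. M a u * x u) * (\<Sum>v\<in>I. M a v * x v) / p" if "I \<subseteq> U" for I x
  proof -
    have "qf I R x = (\<Sum>u\<in>I. \<Sum>v\<in>I. (M a u * x u) * (M a v * x v) / p)"
      unfolding qf_def
    proof (intro sum.cong refl)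
      fix u v assume "u \<in> I" "v \<in> I"
      then have "R u v = M a u * M a v / p" using Rval that by blast
      then show "x u * R u v * x v = M a u * x u * (M a v * x v) / p" by simp
    qed
    also have "\<dots> = (\<Sum>u\<in>I. M a u * x u) * (\<Sum>v\<in>I. M a v * x v) / p"
      by (simp add: sum_product sum_divide_distrib)
    finally show ?thesis .
  qed
  have psdR: "psd_on U R" unfolding psd_on_qf
  proof (intro conjI allI)
    show "\<forall>i\<in>U. \<forall>j\<in>U. R i j = R j i" using Rsym by blast
    fix x :: "_ \<Rightarrow> real"
    show "0 \<le> qf U R x" using qfR[of U x] p0 by simp
  qed
  have psdM': "psd_on U' M'" unfolding psd_on_qf
  proof (intro conjI allI)
    show "\<forall>i\<in>U'. \<forall>j\<in>U'. M' i j = M' j i" using symM Rsym unfolding M'_def U'_def by auto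
    fix x :: "_ \<Rightarrow> real"
    have U'U: "U' \<subseteq> U" unfolding U'_def by auto
    have finU': "finite U'" using finU unfolding U'_def by simp
    define c where "c = (\<Sum>v\<in>U'. M a v * x v)"
    have "qf U' M' x = qf U' M x - qf U' R x"
    proof -
      have "qf U' M' x = (\<Sum>i\<in>U'. \<Sum>j\<in>U'. x i * M i j * x j - x i * R i j * x j)"
        unfolding qf_def M'_def by (simp add: right_diff_distrib left_diff_distrib)
      also have "\<dots> = qf U' M x - qf U' R x"
        unfolding qf_def by (simp only: sum_subtractf)
      finally show ?thesis .
    qed
    then have qfM': "qf U' M' x = qf U' M x - c * c / p"
      using qfR[OF U'U, of x] unfolding c_def by simp
    show "0 \<le> qf U' M' x"
    proof (cases "p = 0")
      case True
      have "psd_on U' M" using psd_restrict[OF psdM finU U'U] .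
      then show ?thesis using qfM' True unfolding psd_on_qf by simp
    next
      case False
      then have pp: "p > 0" using p0 by simp
      define y where "y = x(a := - c / p)"
      have Uins: "U = insert a U'" using aU unfolding U'_def by auto
      have aU': "a \<notin> U'" unfolding U'_def by simp
      have "0 \<le> qf U M y" using psdM unfolding psd_on_qf by blast
      also have "qf U M y = qf U' M y + 2 * y a * (\<Sum>j\<in>U'. M a j * y j) + y a * M a a * y a"
        unfolding Uins by (rule qf_insert[OF finU' aU']) (use symM U'U aU in auto)
      also have "qf U' M y = qf U' M x" unfolding qf_def y_def using aU' by (intro sum.cong) auto
      also have "(\<Sum>j\<in>U'. M a j * y j) = c" unfolding c_def y_def using aU' by (intro sum.cong) auto
      also have "y a = - c / p" unfolding y_def by simp
      finally have "0 \<le> qf U' M x + 2 * (- c / p) * c + (- c / p) * p * (- c / p)"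
        unfolding p_def by simp
      also have "\<dots> = qf U' M x - c * c / p" using pp by (simp add: field_simps power2_eq_square)
      finally show ?thesis using qfM' by simp
    qed
  qed
  have card': "n = card (X' - Y)"
  proof -
    have "X' - Y = (X - Y) - {a}" unfolding X'_def by auto
    then show ?thesis using Suc.hyps(2) aXY Suc.prems(1) by simp
  qed
  have cross': "\<forall>u\<in>X'-Y. \<forall>v\<in>Y-X'. M' u v = 0"
  proof (intro ballI)
    fix u v assume u: "u \<in> X' - Y" and v: "v \<in> Y - X'"
    have vX: "v \<notin> X" using v aXY unfolding X'_def by auto
    have "M u v = 0" using Suc.prems(4) u vX v unfolding X'_def by auto
    then show "M' u v = 0" unfolding M'_def R_def using vX by simp
  qed
  obtain M1' M2' where IH: "psd_on (X'\<union>Y) M1'" "psd_on (X'\<union>Y) M2'"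
     "\<forall>u v. u\<notin>X' \<or> v\<notin>X' \<longrightarrow> M1' u v = 0" "\<forall>u v. u\<notin>Y \<or> v\<notin>Y \<longrightarrow> M2' u v = 0"
     "\<forall>u\<in>X'\<union>Y. \<forall>v\<in>X'\<union>Y. M' u v = M1' u v + M2' u v"
  proof -
    have finX': "finite X'" using Suc.prems(1) unfolding X'_def by simp
    have pM'': "psd_on (X' \<union> Y) M'" using psdM' U'eq by simp
    show ?thesis using Suc.hyps(1)[OF card' finX' Suc.prems(2) pM'' cross'] that by blast
  qed
  define M1 where "M1 = (\<lambda>u v. R u v + M1' u v)"
  have U'U: "U' \<subseteq> U" unfolding U'_def by auto
  have e1: "psd_on U M1'"
    by (rule psd_extend[OF IH(1)[unfolded U'eq] finU U'U]) (use IH(3) U'eq in blast)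
  have e2: "psd_on U M2'"
    by (rule psd_extend[OF IH(2)[unfolded U'eq] finU U'U]) (use IH(4) U'eq in blast)
  have pM1: "psd_on U M1" unfolding M1_def by (rule psd_add[OF psdR e1])
  have supp1: "\<forall>u v. u\<notin>X \<or> v\<notin>X \<longrightarrow> M1 u v = 0"
    using IH(3) unfolding M1_def R_def X'_def by auto
  have aval: "M a v = R a v" if "v \<in> U" for v
  proof (cases "v \<in> X")
    case True
    show ?thesis
    proof (cases "p = 0")
      case True
      then show ?thesis using psd_diag_zero[OF psdM finU aU that] unfolding R_def p_def by simp
    next
      case False
      then show ?thesis using True aXY unfolding R_def p_def by simp
    qed
  next
    case False
    then show ?thesis using Mav0[OF that False] unfolding R_def by simp
  qed
  have eq: "\<forall>u\<in>U. \<forall>v\<in>U. M u v = M1 u v + M2' u v"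
  proof (intro ballI)
    fix u v assume u: "u \<in> U" and v: "v \<in> U"
    have aX': "a \<notin> X'" unfolding X'_def by simp
    have aY: "a \<notin> Y" using aXY by simp
    show "M u v = M1 u v + M2' u v"
    proof (cases "u = a")
      case True
      then show ?thesis using aval[OF v] IH(3,4) aX' aY unfolding M1_def by simp
    next
      case ua: False
      show ?thesis
      proof (cases "v = a")
        case True
        have "M u v = M a u" using symM u v True by simp
        also have "\<dots> = R a u" using aval[OF u] .
        also have "\<dots> = R u v" using Rsym True by simp
        finally show ?thesis using IH(3,4) aX' aY True unfolding M1_def by simp
      next
        case False
        then have "u \<in> X' \<union> Y" "v \<in> X' \<union> Y" using u v ua U'eq unfolding U'_def by auto
        then show ?thesis using IH(5) unfolding M1_def M'_def by (auto simp: algebra_simps)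
      qed
    qed
  qed
  show ?case
    by (intro exI[of _ M1] exI[of _ M2']) (use pM1 e2 supp1 IH(4) eq in \<open>auto simp: U_def\<close>)
qed



lemma SA_from_K:
  assumes SA: "loewner_superadditive {0..<s} complete_adj f" and fin: "finite S" and cs: "card S \<le> s"
    and f0: "f 0 = 0"
  shows "\<forall>A B. psd_on S A \<and> psd_on S B \<longrightarrow> psd_on S (\<lambda>u v. f (A u v + B u v) - f (A u v) - f (B u v))"
proof (intro allI impI)
  fix A B assume AB: "psd_on S A \<and> psd_on S B"
  obtain g where g: "bij_betw g S {0..<card S}" using ex_bij_betw_finite_nat[OF fin] by blast
  define h where "h = inv_into S g"
  have h: "bij_betw h {0..<card S} S" unfolding h_def by (rule bij_betw_inv_into[OF g])
  have hg: "h (g u) = u" if "u \<in> S" for u using g that unfolding h_def by (simp add: bij_betw_inv_into_left)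
  define T where "T = {0..<card S}"
  define ext where "ext = (\<lambda>(N :: 'a \<Rightarrow> 'a \<Rightarrow> real) i j. if i \<in> T \<and> j \<in> T then N (h i) (h j) else 0)"
  have Tsub: "T \<subseteq> {0..<s}" unfolding T_def using cs by auto
  have PHext: "PH {0..<s} complete_adj (ext N)" if "psd_on S N" for N
  proof -
    have "psd_on T (\<lambda>i j. N (h i) (h j))" using psd_reindex[OF h that] unfolding T_def .
    then have "psd_on T (ext N)" unfolding ext_def by (rule psd_cong) auto
    then have "psd_on {0..<s} (ext N)"
      by (rule psd_extend[OF _ _ Tsub]) (auto simp: ext_def)
    then show ?thesis unfolding PH_def complete_adj_def by simp
  qed
  have "PH {0..<s} complete_adj (\<lambda>i j. entrywise f (\<lambda>a b. ext A a b + ext B a b) i j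
          - entrywise f (ext A) i j - entrywise f (ext B) i j)"
    using SA PHext AB unfolding loewner_superadditive_def by blast
  then have "psd_on {0..<s} (\<lambda>i j. f (ext A i j + ext B i j) - f (ext A i j) - f (ext B i j))"
    unfolding PH_def entrywise_def by simp
  then have "psd_on T (\<lambda>i j. f (ext A i j + ext B i j) - f (ext A i j) - f (ext B i j))"
    by (rule psd_restrict[OF _ _ Tsub]) simp
  then have "psd_on S (\<lambda>u v. f (ext A (g u) (g v) + ext B (g u) (g v)) - f (ext A (g u) (g v)) - f (ext B (g u) (g v)))"
    using psd_reindex[OF g] unfolding T_def by blast
  then show "psd_on S (\<lambda>u v. f (A u v + B u v) - f (A u v) - f (B u v))"
  proof (rule psd_cong, intro ballI)
    fix u v assume "u \<in> S" "v \<in> S"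
    then have "g u \<in> T" "g v \<in> T" using g unfolding T_def by (auto simp: bij_betw_def)
    then show "f (ext A (g u) (g v) + ext B (g u) (g v)) - f (ext A (g u) (g v)) - f (ext B (g u) (g v))
       = f (A u v + B u v) - f (A u v) - f (B u v)"
      unfolding ext_def using hg \<open>u \<in> S\<close> \<open>v \<in> S\<close> by simp
  qed
qed

lemma glue:
  fixes X Y :: "'a set"
  assumes finX: "finite X" and finY: "finite Y"
    and f0: "f 0 = 0"
    and cl: "\<forall>u\<in>X\<inter>Y. \<forall>v\<in>X\<inter>Y. u\<noteq>v \<longrightarrow> EXX u v \<and> EYY u v"
    and subX: "\<forall>u\<in>X. \<forall>v\<in>X. EU u v \<longrightarrow> EXX u v"
    and subY: "\<forall>u\<in>Y. \<forall>v\<in>Y. EU u v \<longrightarrow> EYY u v"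
    and nocross: "\<forall>u\<in>X-Y. \<forall>v\<in>Y-X. \<not> EU u v"
    and PX: "preserves_positivity X EXX f" and PY: "preserves_positivity Y EYY f"
    and SA: "\<forall>A B. psd_on (X\<inter>Y) A \<and> psd_on (X\<inter>Y) B \<longrightarrow>
               psd_on (X\<inter>Y) (\<lambda>u v. f (A u v + B u v) - f (A u v) - f (B u v))"
  shows "preserves_positivity (X\<union>Y) EU f"
  unfolding preserves_positivity_def
proof (intro allI impI)
  fix M assume PM: "PH (X\<union>Y) EU M"
  define U where "U = X \<union> Y"
  have finU: "finite U" using finX finY unfolding U_def by simp
  have psdM: "psd_on U M" using PM unfolding PH_def U_def by simp
  have zM: "M u v = 0" if "u \<in> U" "v \<in> U" "u \<noteq> v" "\<not> EU u v" for u v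
    using PM that unfolding PH_def U_def by blast
  have cross: "\<forall>u\<in>X-Y. \<forall>v\<in>Y-X. M u v = 0"
    using nocross zM unfolding U_def by blast
  obtain M1 M2 where D: "psd_on U M1" "psd_on U M2"
     "\<forall>u v. u\<notin>X \<or> v\<notin>X \<longrightarrow> M1 u v = 0" "\<forall>u v. u\<notin>Y \<or> v\<notin>Y \<longrightarrow> M2 u v = 0"
     "\<forall>u\<in>U. \<forall>v\<in>U. M u v = M1 u v + M2 u v"
    using psd_split[OF finX finY psdM[unfolded U_def] cross] unfolding U_def by blast
  have XU: "X \<subseteq> U" and YU: "Y \<subseteq> U" unfolding U_def by auto
  have PH1: "PH X EXX M1" unfolding PH_def
  proof
    show "psd_on X M1" by (rule psd_restrict[OF D(1) finU XU])
    show "\<forall>i\<in>X. \<forall>j\<in>X. i \<noteq> j \<and> \<not> EXX i j \<longrightarrow> M1 i j = 0"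
    proof (intro ballI impI)
      fix i j assume ij: "i \<in> X" "j \<in> X" "i \<noteq> j \<and> \<not> EXX i j"
      then have "\<not> (i \<in> Y \<and> j \<in> Y)" using cl by blast
      then have "M2 i j = 0" using D(4) by blast
      moreover have "M i j = 0" using zM ij subX XU by blast
      ultimately show "M1 i j = 0" using D(5) ij XU by force
    qed
  qed
  have PH2: "PH Y EYY M2" unfolding PH_def
  proof
    show "psd_on Y M2" by (rule psd_restrict[OF D(2) finU YU])
    show "\<forall>i\<in>Y. \<forall>j\<in>Y. i \<noteq> j \<and> \<not> EYY i j \<longrightarrow> M2 i j = 0"
    proof (intro ballI impI)
      fix i j assume ij: "i \<in> Y" "j \<in> Y" "i \<noteq> j \<and> \<not> EYY i j"
      then have "\<not> (i \<in> X \<and> j \<in> X)" using cl by blast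
      then have "M1 i j = 0" using D(3) by blast
      moreover have "M i j = 0" using zM ij subY YU by blast
      ultimately show "M2 i j = 0" using D(5) ij YU by force
    qed
  qed
  have F1: "psd_on U (\<lambda>u v. f (M1 u v))"
  proof -
    have "psd_on X (\<lambda>u v. f (M1 u v))" using PX PH1 unfolding preserves_positivity_def PH_def entrywise_def by blast
    then show ?thesis by (rule psd_extend[OF _ finU XU]) (use D(3) f0 in auto)
  qed
  have F2: "psd_on U (\<lambda>u v. f (M2 u v))"
  proof -
    have "psd_on Y (\<lambda>u v. f (M2 u v))" using PY PH2 unfolding preserves_positivity_def PH_def entrywise_def by blast
    then show ?thesis by (rule psd_extend[OF _ finU YU]) (use D(4) f0 in auto)
  qed
  have F3: "psd_on U (\<lambda>u v. f (M1 u v + M2 u v) - f (M1 u v) - f (M2 u v))"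
  proof -
    have SU: "X \<inter> Y \<subseteq> U" unfolding U_def by auto
    have "psd_on (X\<inter>Y) (\<lambda>u v. f (M1 u v + M2 u v) - f (M1 u v) - f (M2 u v))"
      using SA psd_restrict[OF D(1) finU SU] psd_restrict[OF D(2) finU SU] by blast
    then show ?thesis by (rule psd_extend[OF _ finU SU]) (use D(3,4) f0 in auto)
  qed
  have "psd_on U (\<lambda>u v. (f (M1 u v) + f (M2 u v)) + (f (M1 u v + M2 u v) - f (M1 u v) - f (M2 u v)))"
    by (rule psd_add[OF psd_add[OF F1 F2] F3])
  then have "psd_on U (entrywise f M)"
    by (rule psd_cong) (use D(5) in \<open>auto simp: entrywise_def\<close>)
  moreover have "\<forall>i\<in>U. \<forall>j\<in>U. i \<noteq> j \<and> \<not> EU i j \<longrightarrow> entrywise f M i j = 0"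
    using zM f0 unfolding entrywise_def by auto
  ultimately show "PH (X\<union>Y) EU (entrywise f M)" unfolding PH_def U_def by blast
qed

lemma pc_facts:
  assumes "prime_comps E U P" "simple_graph V E"
  shows "\<Union>P = U \<and> (\<forall>u\<in>U. \<forall>v\<in>U. E u v \<longrightarrow> (\<exists>B\<in>P. u\<in>B \<and> v\<in>B))"
  using assms
proof (induction rule: prime_comps.induct)
  case (base U)
  then show ?case by auto
next
  case (step U A C B P1 P2)
  have dec: "A \<union> C \<union> B = U" "A \<inter> C = {}" "C \<inter> B = {}"
    "\<forall>xs. is_path E U xs \<and> hd xs \<in> A \<and> last xs \<in> B \<longrightarrow> set xs \<inter> C \<noteq> {}"
    using step.hyps(1) unfolding decomposition_def by blast+
  have E: "E x y \<Longrightarrow> x \<noteq> y \<and> E y x" for x y using step.prems unfolding simple_graph_def by blast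
  have noAB: False if "x \<in> A" "y \<in> B" "E x y" for x y
  proof -
    have "is_path E U [x, y]" using that E dec(1) unfolding is_path_def
      by (auto simp: less_Suc_eq nth_Cons')
    then show False using dec(2-4) that by fastforce
  qed
  show ?case
  proof
    show "\<Union>(P1 \<union> P2) = U" using step dec(1) by auto
    show "\<forall>u\<in>U. \<forall>v\<in>U. E u v \<longrightarrow> (\<exists>B\<in>P1 \<union> P2. u \<in> B \<and> v \<in> B)"
    proof (intro ballI impI)
      fix u v assume uv: "u \<in> U" "v \<in> U" "E u v"
      show "\<exists>B\<in>P1 \<union> P2. u \<in> B \<and> v \<in> B"
      proof (cases "u \<in> A \<union> C \<and> v \<in> A \<union> C")
        case True then show ?thesis using step.IH(1) step.prems uv by blast
      next
        case F1: False
        show ?thesis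
        proof (cases "u \<in> B \<union> C \<and> v \<in> B \<union> C")
          case True then show ?thesis using step.IH(2) step.prems uv by blast
        next
          case False
          then have "(u \<in> A \<and> v \<in> B) \<or> (u \<in> B \<and> v \<in> A)" using F1 uv dec(1) by blast
          then show ?thesis using noAB E uv(3) by blast
        qed
      qed
    qed
  qed
qed



lemma pc_nonempty: "prime_comps E U P \<Longrightarrow> P \<noteq> {}"
  by (induction rule: prime_comps.induct) auto

lemma pp_cong:
  assumes "\<forall>u\<in>I. \<forall>v\<in>I. u \<noteq> v \<longrightarrow> (E u v \<longleftrightarrow> E' u v)"
  shows "preserves_positivity I E f = preserves_positivity I E' f"
proof -
  have "PH I E M = PH I E' M" for M unfolding PH_def using assms by blast
  then show ?thesis unfolding preserves_positivity_def by simp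
qed

theorem theorem4p1:
  fixes V :: "'a set" and E :: "'a \<Rightarrow> 'a \<Rightarrow> bool"
    and Bs :: "'a set list" and f :: "real \<Rightarrow> real"
  assumes "simple_graph V E"
    and "prime_comps E V (set Bs)" and "distinct Bs"
    and "perfect_ordering E Bs"
    and "f 0 = 0"
    and "\<forall>i<length Bs. preserves_positivity (Bs ! i) E f"
    and "loewner_superadditive {0..<max_sep Bs} complete_adj f"
  shows "preserves_positivity V E f"
proof -
  note sg = assms(1) and pc = assms(2) and po = assms(4) and f0 = assms(5)
    and PB = assms(6) and LS = assms(7)
  define n where "n = length Bs"
  have facts: "\<Union>(set Bs) = V" "\<forall>u\<in>V. \<forall>v\<in>V. E u v \<longrightarrow> (\<exists>B\<in>set Bs. u\<in>B \<and> v\<in>B)"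
    using pc_facts[OF pc sg] by blast+
  have n0: "n > 0" using pc_nonempty[OF pc] unfolding n_def by auto
  have finV: "finite V" using sg unfolding simple_graph_def by simp
  have finB: "finite (Bs ! j)" if "j < n" for j
  proof -
    have "Bs ! j \<in> set Bs" using that unfolding n_def by simp
    then have "Bs ! j \<subseteq> V" using facts(1) by blast
    then show ?thesis using finV finite_subset by blast
  qed
  have Eirr: "E u v \<Longrightarrow> u \<noteq> v" for u v using sg unfolding simple_graph_def by blast
  define H where "H i = (\<Union>j<Suc i. Bs ! j)" for i
  define Ei where "Ei i u v = (E u v \<and> (\<exists>j<Suc i. u \<in> Bs ! j \<and> v \<in> Bs ! j))" for i u v
  have finH: "finite (H i)" if "i < n" for i unfolding H_def using finB that by auto
  have sepeq: "sep_set Bs (Suc i) = H i \<inter> Bs ! Suc i" for i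
    unfolding sep_set_def H_def by simp
  have HSuc: "H (Suc i) = H i \<union> Bs ! Suc i" for i
    unfolding H_def by (simp add: lessThan_Suc Un_commute)
  have main: "i < n \<longrightarrow> preserves_positivity (H i) (Ei i) f" for i
  proof (induction i)
    case 0
    show ?case
    proof
      assume "0 < n"
      then have "preserves_positivity (Bs ! 0) E f" using PB unfolding n_def by simp
      moreover have "H 0 = Bs ! 0" unfolding H_def by (simp add: lessThan_Suc)
      moreover have "\<forall>u\<in>Bs!0. \<forall>v\<in>Bs!0. u \<noteq> v \<longrightarrow> (E u v \<longleftrightarrow> Ei 0 u v)"
        unfolding Ei_def by auto
      ultimately show "preserves_positivity (H 0) (Ei 0) f" using pp_cong[of "Bs ! 0" E "Ei 0" f] by simp
    qed
  next
    case (Suc i)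
    show ?case
    proof
      assume lt: "Suc i < n"
      then have IH: "preserves_positivity (H i) (Ei i) f" using Suc.IH by simp
      define S where "S = H i \<inter> Bs ! Suc i"
      have Ssep: "S = sep_set Bs (Suc i)" unfolding S_def sepeq ..
      have clS: "\<forall>u\<in>S. \<forall>v\<in>S. u \<noteq> v \<longrightarrow> E u v" and
           contS: "\<exists>j<Suc i. S \<subseteq> Bs ! j"
      proof -
        have "Suc i < length Bs" using lt unfolding n_def .
        then have "clique E (sep_set Bs (Suc i)) \<and> (0 < Suc i \<longrightarrow> (\<exists>j<Suc i. sep_set Bs (Suc i) \<subseteq> Bs ! j))"
          using po unfolding perfect_ordering_def by blast
        then show "\<forall>u\<in>S. \<forall>v\<in>S. u \<noteq> v \<longrightarrow> E u v" "\<exists>j<Suc i. S \<subseteq> Bs ! j"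
          unfolding Ssep clique_def by auto
      qed
      have cl: "\<forall>u\<in>S. \<forall>v\<in>S. u \<noteq> v \<longrightarrow> Ei i u v \<and> E u v"
        using clS contS unfolding Ei_def by blast
      have subX: "\<forall>u\<in>H i. \<forall>v\<in>H i. Ei (Suc i) u v \<longrightarrow> Ei i u v"
      proof (intro ballI impI)
        fix u v assume uv: "u \<in> H i" "v \<in> H i" "Ei (Suc i) u v"
        then obtain j where j: "j < Suc (Suc i)" "u \<in> Bs ! j" "v \<in> Bs ! j" "E u v"
          unfolding Ei_def by blast
        show "Ei i u v"
        proof (cases "j = Suc i")
          case True
          then have "u \<in> S" "v \<in> S" using uv j unfolding S_def by auto
          then show ?thesis using cl Eirr[OF j(4)] by blast
        next
          case False
          then have "j < Suc i" using j by simp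
          then show ?thesis using j unfolding Ei_def by blast
        qed
      qed
      have subY: "\<forall>u\<in>Bs ! Suc i. \<forall>v\<in>Bs ! Suc i. Ei (Suc i) u v \<longrightarrow> E u v"
        unfolding Ei_def by blast
      have nocross: "\<forall>u\<in>H i - Bs ! Suc i. \<forall>v\<in>Bs ! Suc i - H i. \<not> Ei (Suc i) u v"
      proof (intro ballI notI)
        fix u v assume u: "u \<in> H i - Bs ! Suc i" and v: "v \<in> Bs ! Suc i - H i" and e: "Ei (Suc i) u v"
        then obtain j where j: "j < Suc (Suc i)" "u \<in> Bs ! j" "v \<in> Bs ! j"
          unfolding Ei_def by blast
        show False
        proof (cases "j = Suc i")
          case True then show False using u j by simp
        next
          case False
          then have "j < Suc i" using j by simp
          then show False using v j unfolding H_def by blast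
        qed
      qed
      have cardS: "card S \<le> max_sep Bs"
      proof -
        have "Suc i \<in> {..<length Bs}" using lt unfolding n_def by simp
        then show ?thesis unfolding max_sep_def Ssep by (intro Max_ge) auto
      qed
      have SA: "\<forall>A B. psd_on (H i \<inter> Bs ! Suc i) A \<and> psd_on (H i \<inter> Bs ! Suc i) B \<longrightarrow>
               psd_on (H i \<inter> Bs ! Suc i) (\<lambda>u v. f (A u v + B u v) - f (A u v) - f (B u v))"
      proof -
        have "finite S" unfolding S_def using finH[of i] lt by simp
        then show ?thesis using SA_from_K[OF LS _ cardS f0] unfolding S_def by blast
      qed
      have PY: "preserves_positivity (Bs ! Suc i) E f" using PB lt unfolding n_def by simp
      have "preserves_positivity (H i \<union> Bs ! Suc i) (Ei (Suc i)) f"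
      proof (rule glue[OF finH finB f0 _ subX subY nocross IH PY SA])
        show "i < n" using lt by simp
        show "Suc i < n" using lt .
        show "\<forall>u\<in>H i \<inter> Bs ! Suc i. \<forall>v\<in>H i \<inter> Bs ! Suc i. u \<noteq> v \<longrightarrow> Ei i u v \<and> E u v"
          using cl unfolding S_def .
      qed
      then show "preserves_positivity (H (Suc i)) (Ei (Suc i)) f" unfolding HSuc .
    qed
  qed
  define m where "m = n - 1"
  have m: "m < n" "Suc m = n" unfolding m_def using n0 by auto
  have Hm: "H m = V"
  proof -
    have "H m = (\<Union>j<n. Bs ! j)" unfolding H_def m(2) ..
    also have "\<dots> = \<Union>(set Bs)" unfolding n_def by (auto simp: set_conv_nth)
    finally show ?thesis using facts(1) by simp
  qed
  have "\<forall>u\<in>V. \<forall>v\<in>V. u \<noteq> v \<longrightarrow> (Ei m u v \<longleftrightarrow> E u v)"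
  proof (intro ballI impI)
    fix u v assume uv: "u \<in> V" "v \<in> V" "u \<noteq> v"
    show "Ei m u v \<longleftrightarrow> E u v"
    proof
      assume "E u v"
      then obtain B where "B \<in> set Bs" "u \<in> B" "v \<in> B" using facts(2) uv by blast
      then obtain j where "j < n" "Bs ! j = B" unfolding n_def by (auto simp: in_set_conv_nth)
      then show "Ei m u v" using \<open>E u v\<close> \<open>u \<in> B\<close> \<open>v \<in> B\<close> m(2) unfolding Ei_def by auto
    qed (simp add: Ei_def)
  qed
  then have "preserves_positivity V (Ei m) f = preserves_positivity V E f" by (rule pp_cong)
  then show ?thesis using main[of m] m(1) Hm by simp
qed

end
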